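(* Let $R=\mathsf k[x_1,\ldots,x_n]$ and let $I\subseteq R$ be an ideal generated by square-free monomials $m_1,\ldots,m_q$ satisfying $m_b\mid\mathrm{lcm}(m_i:i\in B)$ for every $(b,B)\in\mathcal{D}$, where $\mathcal{D}$ is a finite subset of $[q]\times(2^{[q]}\smallsetminus\{\emptyset\})$. Then: (1) $\psi_I(\varepsilon_{\mathcal{D},i})=\psi_I(\epsilon_i)=m_i$ for all $i\in[q]$; (2) $\psi_I(\varepsilon_{\mathcal{D}}^{\mathbf a})=\mathbf m^{\mathbf a}$ for each $\mathbf a\in\mathcal N^r_q$, $r\ge 1$; (3) $\psi_I(\mathcal{E}_{\mathcal{D}}^r)R=I^r$ for every $r>0$; (4) $\psi_I(\mathrm{lcm}(\varepsilon_{\mathcal{D}}^{\mathbf a_1},\ldots,\varepsilon_{\mathcal{D}}^{\mathbf a_t}))=\mathrm{lcm}(\mathbf m^{\mathbf a_1},\ldots,\mathbf m^{\mathbf a_t})$ for all $r\ge1$, $t\ge1$ and $\mathbf a_1,\ldots,\mathbf a_t\in\mathcal N^r_q$.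
   Context: $S_{[q]}=\mathsf k[y_A:\emptyset\ne A\subseteq[q]]$ over a field $\mathsf k$. $\epsilon_i=\prod_{\emptyset\ne A\subseteq[q],\,i\in A}y_A$. $Q(\mathcal{D})=\{A\subseteq[q]:A\ne\emptyset,\ A\cap B\ne\emptyset\text{ for all }(b,B)\in\mathcal{D}\text{ with }b\in A\}$; $\varepsilon_{\mathcal{D},i}=\prod_{A\in Q(\mathcal{D}),\,i\in A}y_A$; $\mathcal{E}_{\mathcal{D}}=(\varepsilon_{\mathcal{D},1},\ldots,\varepsilon_{\mathcal{D},q})$. $\mathcal N^r_q=\{\mathbf a\in\mathbb N^q:a_1+\dots+a_q=r\}$, $\varepsilon_{\mathcal{D}}^{\mathbf a}=\prod_i\varepsilon_{\mathcal{D},i}^{a_i}$, $\mathbf m^{\mathbf a}=\prod_i m_i^{a_i}$. For $k\in[n]$, $\mathcal A_k=\{j\in[q]:x_k\mid m_j\}$. $\psi_I:S_{[q]}\to R$ is the $\mathsf k$-algebra homomorphism with $\psi_I(y_A)=\prod_{k\in[n],\,\mathcal A_k=A}x_k$ if $A=\mathcal A_k$ for some $k\in[n]$, and $\psi_I(y_A)=1$ otherwise. *)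

theory Defs
  imports "HOL-Library.Poly_Mapping"
begin

type_synonym ('v, 'k) mpoly = "('v \<Rightarrow>\<^sub>0 nat) \<Rightarrow>\<^sub>0 'k"

text \<open>Polynomials involving only variables from V (e.g. k[x_1..x_n] with V = {1..n}).\<close>
definition polys :: "'v set \<Rightarrow> ('v, 'k::zero) mpoly set" where
  "polys V = {p. \<forall>\<alpha>\<in>Poly_Mapping.keys p. Poly_Mapping.keys \<alpha> \<subseteq> V}"

definition mon :: "('v \<Rightarrow>\<^sub>0 nat) \<Rightarrow> ('v, 'k::{zero,one}) mpoly" where
  "mon \<alpha> = Poly_Mapping.single \<alpha> 1"

definition var :: "'v \<Rightarrow> ('v, 'k::{zero,one}) mpoly" where
  "var v = mon (Poly_Mapping.single v 1)"

definition is_monomial :: "('v, 'k::{zero,one}) mpoly \<Rightarrow> bool" where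
  "is_monomial p \<longleftrightarrow> (\<exists>\<alpha>. p = mon \<alpha>)"

definition squarefree_monomial_in :: "'v set \<Rightarrow> ('v, 'k::{zero,one}) mpoly \<Rightarrow> bool" where
  "squarefree_monomial_in V p \<longleftrightarrow>
     (\<exists>\<alpha>. p = mon \<alpha> \<and> Poly_Mapping.keys \<alpha> \<subseteq> V \<and> (\<forall>v. Poly_Mapping.lookup \<alpha> v \<le> 1))"

text \<open>k-algebra homomorphism determined by the images g v of the variables.\<close>
definition subst :: "('v \<Rightarrow> ('w, 'k::comm_ring_1) mpoly) \<Rightarrow> ('v, 'k) mpoly \<Rightarrow> ('w, 'k) mpoly" where
  "subst g p = (\<Sum>\<alpha>\<in>Poly_Mapping.keys p. Poly_Mapping.single 0 (Poly_Mapping.lookup p \<alpha>) * (\<Prod>v\<in>Poly_Mapping.keys \<alpha>. g v ^ Poly_Mapping.lookup \<alpha> v))"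

definition gen_ideal :: "'a::comm_ring_1 set \<Rightarrow> 'a set \<Rightarrow> 'a set" where
  "gen_ideal C G = {x. \<exists>F c. finite F \<and> F \<subseteq> G \<and> (\<forall>f\<in>F. c f \<in> C) \<and> x = (\<Sum>f\<in>F. c f * f)}"

definition ideal_pow :: "'a::comm_ring_1 set \<Rightarrow> 'a set \<Rightarrow> nat \<Rightarrow> 'a set" where
  "ideal_pow C J r = gen_ideal C {(\<Prod>i<r. f i) | f. \<forall>i<r. f i \<in> J}"

definition mon_lcm :: "('v, 'k::comm_ring_1) mpoly set \<Rightarrow> ('v, 'k) mpoly" where
  "mon_lcm S = (THE L. is_monomial L \<and> (\<forall>s\<in>S. s dvd L) \<and>
      (\<forall>M. is_monomial M \<and> (\<forall>s\<in>S. s dvd M) \<longrightarrow> L dvd M))"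

text \<open>Variables y_A of S_[q], indexed by nonempty subsets A of [q] = {1..q}.\<close>
definition Yvars :: "nat \<Rightarrow> nat set set" where
  "Yvars q = {A. A \<noteq> {} \<and> A \<subseteq> {1..q}}"

definition eps :: "nat \<Rightarrow> nat \<Rightarrow> (nat set, 'k::comm_ring_1) mpoly" where
  "eps q i = (\<Prod>A\<in>{A\<in>Yvars q. i \<in> A}. var A)"

definition QD :: "nat \<Rightarrow> (nat \<times> nat set) set \<Rightarrow> nat set set" where
  "QD q D = {A\<in>Yvars q. \<forall>(b,B)\<in>D. b \<in> A \<longrightarrow> A \<inter> B \<noteq> {}}"

definition epsD :: "nat \<Rightarrow> (nat \<times> nat set) set \<Rightarrow> nat \<Rightarrow> (nat set, 'k::comm_ring_1) mpoly" where
  "epsD q D i = (\<Prod>A\<in>{A\<in>QD q D. i \<in> A}. var A)"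

definition epsD_pow :: "nat \<Rightarrow> (nat \<times> nat set) set \<Rightarrow> (nat \<Rightarrow> nat) \<Rightarrow> (nat set, 'k::comm_ring_1) mpoly" where
  "epsD_pow q D a = (\<Prod>i\<in>{1..q}. epsD q D i ^ a i)"

definition ED :: "nat \<Rightarrow> (nat \<times> nat set) set \<Rightarrow> (nat set, 'k::comm_ring_1) mpoly set" where
  "ED q D = gen_ideal (polys (Yvars q)) (epsD q D ` {1..q})"

definition mpow :: "nat \<Rightarrow> (nat \<Rightarrow> ('v, 'k::comm_ring_1) mpoly) \<Rightarrow> (nat \<Rightarrow> nat) \<Rightarrow> ('v, 'k) mpoly" where
  "mpow q m a = (\<Prod>i\<in>{1..q}. m i ^ a i)"

text \<open>N^r_q as functions on indices (only values on [q] matter).\<close>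
definition Nrq :: "nat \<Rightarrow> nat \<Rightarrow> (nat \<Rightarrow> nat) set" where
  "Nrq q r = {a. (\<Sum>i\<in>{1..q}. a i) = r}"

definition calA :: "nat \<Rightarrow> (nat \<Rightarrow> (nat, 'k::comm_ring_1) mpoly) \<Rightarrow> nat \<Rightarrow> nat set" where
  "calA q m k = {j\<in>{1..q}. var k dvd m j}"

definition psi_var :: "nat \<Rightarrow> nat \<Rightarrow> (nat \<Rightarrow> (nat, 'k::comm_ring_1) mpoly) \<Rightarrow> nat set \<Rightarrow> (nat, 'k) mpoly" where
  "psi_var n q m A = (if \<exists>k\<in>{1..n}. A = calA q m k
      then (\<Prod>k\<in>{k\<in>{1..n}. calA q m k = A}. var k) else 1)"

definition psi :: "nat \<Rightarrow> nat \<Rightarrow> (nat \<Rightarrow> (nat, 'k::comm_ring_1) mpoly) \<Rightarrow> (nat set, 'k) mpoly \<Rightarrow> (nat, 'k) mpoly" where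
  "psi n q m = subst (psi_var n q m)"

end

theory Submission
  imports Defs
begin


lemma poly_decomp: "p = (\<Sum>a\<in>Poly_Mapping.keys p. Poly_Mapping.single a (Poly_Mapping.lookup p a))"
  by (rule poly_mapping_eqI)
     (simp add: lookup_sum lookup_single when_def sum.delta' in_keys_iff)

definition Gp :: "('v \<Rightarrow> ('w, 'k::comm_ring_1) mpoly) \<Rightarrow> ('v \<Rightarrow>\<^sub>0 nat) \<Rightarrow> ('w, 'k) mpoly" where
  "Gp g a = (\<Prod>v\<in>Poly_Mapping.keys a. g v ^ Poly_Mapping.lookup a v)"

lemma Gp_super: "finite S \<Longrightarrow> Poly_Mapping.keys a \<subseteq> S \<Longrightarrow> Gp g a = (\<Prod>v\<in>S. g v ^ Poly_Mapping.lookup a v)"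
  unfolding Gp_def by (rule prod.mono_neutral_left) (auto simp: in_keys_iff)

lemma Gp_add: "Gp g (a + b) = Gp g a * Gp g b"
proof -
  let ?S = "Poly_Mapping.keys a \<union> Poly_Mapping.keys b"
  have "Gp g (a+b) = (\<Prod>v\<in>?S. g v ^ Poly_Mapping.lookup (a+b) v)"
    by (rule Gp_super) (use keys_add[of a b] in auto)
  also have "\<dots> = (\<Prod>v\<in>?S. g v ^ Poly_Mapping.lookup a v) * (\<Prod>v\<in>?S. g v ^ Poly_Mapping.lookup b v)"
    by (simp add: lookup_add power_add prod.distrib)
  also have "\<dots> = Gp g a * Gp g b" using Gp_super[of ?S a g] Gp_super[of ?S b g] by simp
  finally show ?thesis .
qed

lemma Gp_zero[simp]: "Gp g 0 = 1" by (simp add: Gp_def)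

lemma subst_super: "finite S \<Longrightarrow> Poly_Mapping.keys p \<subseteq> S \<Longrightarrow>
   subst g p = (\<Sum>a\<in>S. Poly_Mapping.single 0 (Poly_Mapping.lookup p a) * Gp g a)"
  unfolding subst_def Gp_def[symmetric] by (rule sum.mono_neutral_left) (auto simp: in_keys_iff)

lemma subst_add: "subst g (p + q) = subst g p + subst g q"
proof -
  let ?S = "Poly_Mapping.keys p \<union> Poly_Mapping.keys q"
  have "subst g (p+q) = (\<Sum>a\<in>?S. Poly_Mapping.single 0 (Poly_Mapping.lookup (p+q) a) * Gp g a)"
    by (rule subst_super) (use keys_add[of p q] in auto)
  also have "\<dots> = (\<Sum>a\<in>?S. Poly_Mapping.single 0 (Poly_Mapping.lookup p a) * Gp g a) + (\<Sum>a\<in>?S. Poly_Mapping.single 0 (Poly_Mapping.lookup q a) * Gp g a)"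
    by (simp add: lookup_add single_add distrib_right sum.distrib)
  also have "\<dots> = subst g p + subst g q" using subst_super[of ?S p g] subst_super[of ?S q g] by simp
  finally show ?thesis .
qed

lemma subst_zero[simp]: "subst g 0 = 0" by (simp add: subst_def)

lemma subst_sum: "subst g (\<Sum>x\<in>X. f x) = (\<Sum>x\<in>X. subst g (f x))"
  by (induction X rule: infinite_finite_induct) (auto simp: subst_add)

lemma subst_single: "subst g (Poly_Mapping.single a c) = Poly_Mapping.single 0 c * Gp g a"
  by (subst subst_super[of "{a}"]) auto

lemma subst_mult: "subst g (p * q) = subst g p * subst g q"
proof -
  have sm: "\<And>x y. Poly_Mapping.single 0 (x*y) = (Poly_Mapping.single 0 x * Poly_Mapping.single 0 y :: ('a,'b) mpoly)"
    by (simp add: mult_single)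
  have "p * q = (\<Sum>a\<in>Poly_Mapping.keys p. Poly_Mapping.single a (Poly_Mapping.lookup p a)) *
     (\<Sum>b\<in>Poly_Mapping.keys q. Poly_Mapping.single b (Poly_Mapping.lookup q b))"
    using poly_decomp[of p] poly_decomp[of q] by simp
  also have "\<dots> = (\<Sum>a\<in>Poly_Mapping.keys p. \<Sum>b\<in>Poly_Mapping.keys q. Poly_Mapping.single (a+b) (Poly_Mapping.lookup p a * Poly_Mapping.lookup q b))"
    by (simp add: sum_product mult_single)
  finally have "subst g (p*q) = (\<Sum>a\<in>Poly_Mapping.keys p. \<Sum>b\<in>Poly_Mapping.keys q.
      (Poly_Mapping.single 0 (Poly_Mapping.lookup p a) * Gp g a) * (Poly_Mapping.single 0 (Poly_Mapping.lookup q b) * Gp g b))"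
    by (simp add: subst_sum subst_single Gp_add sm ac_simps)
  also have "\<dots> = subst g p * subst g q"
    by (simp add: subst_def Gp_def sum_product)
  finally show ?thesis .
qed

lemma subst_one[simp]: "subst g 1 = 1"
proof -
  have "(1::('a,'b) mpoly) = Poly_Mapping.single 0 1" by (rule poly_mapping_eqI) (simp add: lookup_one lookup_single)
  then show ?thesis using subst_single[of g 0 1] by simp
qed

lemma subst_prod: "subst g (\<Prod>x\<in>X. f x) = (\<Prod>x\<in>X. subst g (f x))"
  by (induction X rule: infinite_finite_induct) (auto simp: subst_mult)

lemma subst_power: "subst g (p ^ e) = subst g p ^ e"
  by (induction e) (auto simp: subst_mult)




lemma mon_mult: "mon a * mon b = (mon (a + b) :: ('v,'k::comm_ring_1) mpoly)"
  by (simp add: mon_def mult_single)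

lemma mon_zero: "mon 0 = (1 :: ('v,'k::comm_ring_1) mpoly)"
  by (rule poly_mapping_eqI) (simp add: mon_def lookup_one lookup_single)

lemma mon_prod: "(\<Prod>x\<in>X. mon (f x)) = (mon (\<Sum>x\<in>X. f x) :: ('v,'k::comm_ring_1) mpoly)"
  by (induction X rule: infinite_finite_induct) (auto simp: mon_zero mon_mult)

lemma mon_power: "mon a ^ e = (mon (\<Sum>j<e. a) :: ('v,'k::comm_ring_1) mpoly)"
  using mon_prod[of "\<lambda>_. a" "{..<e}"] by simp

lemma keys_mon[simp]: "Poly_Mapping.keys (mon a :: ('v,'k::comm_ring_1) mpoly) = {a}"
  by (simp add: mon_def)

lemma lookup_mon: "Poly_Mapping.lookup (mon a :: ('v,'k::comm_ring_1) mpoly) b = (if a = b then 1 else 0)"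
  by (simp add: mon_def lookup_single)

lemma subst_mon: "subst g (mon a) = Gp g a"
  by (simp add: mon_def subst_single)

lemma mon_inj: "(mon a :: ('v,'k::comm_ring_1) mpoly) = mon b \<longleftrightarrow> a = b"
  by (metis keys_mon singleton_inject)

lemma mon_dvd_iff: "(mon a :: ('v,'k::comm_ring_1) mpoly) dvd mon b \<longleftrightarrow>
     (\<forall>v. Poly_Mapping.lookup a v \<le> Poly_Mapping.lookup b v)"
proof
  assume "(mon a :: ('v,'k) mpoly) dvd mon b"
  then obtain p where p: "mon b = (mon a :: ('v,'k) mpoly) * p" by (rule dvdE)
  have "mon a * p = mon a * (\<Sum>d\<in>Poly_Mapping.keys p. Poly_Mapping.single d (Poly_Mapping.lookup p d))"
    using poly_decomp[of p] by simp
  also have "\<dots> = (\<Sum>d\<in>Poly_Mapping.keys p. Poly_Mapping.single (a + d) (Poly_Mapping.lookup p d))"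
    by (simp add: sum_distrib_left mon_def mult_single)
  finally have eq: "mon b = (\<Sum>d\<in>Poly_Mapping.keys p. Poly_Mapping.single (a + d) (Poly_Mapping.lookup p d))"
    using p by simp
  have "Poly_Mapping.keys (mon b :: ('v,'k) mpoly) \<subseteq> (\<Union>d\<in>Poly_Mapping.keys p. Poly_Mapping.keys (Poly_Mapping.single (a + d) (Poly_Mapping.lookup p d)))"
    unfolding eq by (rule keys_sum)
  then obtain d where "b = a + d" by (simp split: if_splits) blast
  then show "\<forall>v. Poly_Mapping.lookup a v \<le> Poly_Mapping.lookup b v" by (simp add: lookup_add)
next
  assume le: "\<forall>v. Poly_Mapping.lookup a v \<le> Poly_Mapping.lookup b v"
  have "b = a + (b - a)"
    by (rule poly_mapping_eqI) (use le in \<open>simp add: lookup_add lookup_minus\<close>)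
  then have "mon b = mon a * (mon (b - a) :: ('v,'k) mpoly)" by (metis mon_mult)
  then show "(mon a :: ('v,'k) mpoly) dvd mon b" by (rule dvdI)
qed

definition lcmexp :: "('v \<Rightarrow>\<^sub>0 nat) set \<Rightarrow> ('v \<Rightarrow>\<^sub>0 nat)" where
  "lcmexp S = Abs_poly_mapping (\<lambda>v. Max ((\<lambda>a. Poly_Mapping.lookup a v) ` S))"

lemma lookup_lcmexp:
  assumes "finite S" "S \<noteq> {}"
  shows "Poly_Mapping.lookup (lcmexp S) v = Max ((\<lambda>a. Poly_Mapping.lookup a v) ` S)"
proof -
  have "{v. Max ((\<lambda>a. Poly_Mapping.lookup a v) ` S) \<noteq> 0} \<subseteq> (\<Union>a\<in>S. Poly_Mapping.keys a)"
  proof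
    fix v assume "v \<in> {v. Max ((\<lambda>a. Poly_Mapping.lookup a v) ` S) \<noteq> 0}"
    moreover have "Max ((\<lambda>a. Poly_Mapping.lookup a v) ` S) \<in> (\<lambda>a. Poly_Mapping.lookup a v) ` S"
      using assms by (intro Max_in) auto
    ultimately show "v \<in> (\<Union>a\<in>S. Poly_Mapping.keys a)" by (auto simp: in_keys_iff)
  qed
  then have "finite {v. Max ((\<lambda>a. Poly_Mapping.lookup a v) ` S) \<noteq> 0}"
    using assms by (meson finite_UN_I finite_keys finite_subset)
  then show ?thesis by (simp add: lcmexp_def)
qed

lemma mon_lcm_mon:
  assumes "finite S" "S \<noteq> {}"
  shows "mon_lcm (mon ` S :: ('v,'k::comm_ring_1) mpoly set) = mon (lcmexp S)"
  unfolding mon_lcm_def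
proof (rule the_equality)
  have ge: "\<And>a v. a \<in> S \<Longrightarrow> Poly_Mapping.lookup a v \<le> Poly_Mapping.lookup (lcmexp S) v"
    using assms by (simp add: lookup_lcmexp)
  show "is_monomial (mon (lcmexp S) :: ('v,'k) mpoly) \<and> (\<forall>s\<in>(mon ` S :: ('v,'k) mpoly set). s dvd mon (lcmexp S)) \<and>
    (\<forall>M. is_monomial M \<and> (\<forall>s\<in>(mon ` S :: ('v,'k) mpoly set). s dvd M) \<longrightarrow> mon (lcmexp S) dvd M)"
  proof -
    have 1: "is_monomial (mon (lcmexp S) :: ('v,'k) mpoly)" by (auto simp: is_monomial_def)
    have 2: "\<forall>s\<in>(mon ` S :: ('v,'k) mpoly set). s dvd mon (lcmexp S)"
      using ge by (auto simp: mon_dvd_iff)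
    have 3: "mon (lcmexp S) dvd M" if H3: "is_monomial M \<and> (\<forall>s\<in>(mon ` S :: ('v,'k) mpoly set). s dvd M)" for M :: "('v,'k) mpoly"
    proof -
      obtain c where c: "M = mon c" using H3 unfolding is_monomial_def by blast
      have "\<forall>a\<in>S. \<forall>v. Poly_Mapping.lookup a v \<le> Poly_Mapping.lookup c v"
        using H3 by (auto simp: c mon_dvd_iff)
      then show ?thesis using assms by (auto simp: c mon_dvd_iff lookup_lcmexp)
    qed
    show ?thesis using 1 2 3 by blast
  qed
  fix L :: "('v,'k) mpoly"
  assume H: "is_monomial L \<and> (\<forall>s\<in>(mon ` S :: ('v,'k) mpoly set). s dvd L) \<and> (\<forall>M. is_monomial M \<and> (\<forall>s\<in>(mon ` S :: ('v,'k) mpoly set). s dvd M) \<longrightarrow> L dvd M)"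
  obtain c where c: "L = mon c" using H by (auto simp: is_monomial_def)
  have "\<forall>s\<in>(mon ` S :: ('v,'k) mpoly set). s dvd mon (lcmexp S)" using ge by (auto simp: mon_dvd_iff)
  then have "L dvd mon (lcmexp S)"
    using H unfolding is_monomial_def by blast
  moreover have "\<forall>a\<in>S. \<forall>v. Poly_Mapping.lookup a v \<le> Poly_Mapping.lookup c v"
    using H by (auto simp: c mon_dvd_iff)
  ultimately have "\<forall>v. Poly_Mapping.lookup c v = Poly_Mapping.lookup (lcmexp S) v"
    using assms by (auto simp: c mon_dvd_iff lookup_lcmexp intro!: antisym Max.boundedI)
  then show "L = mon (lcmexp S)" using c poly_mapping_eqI by metis
qed



lemma polys_add: "p \<in> polys V \<Longrightarrow> q \<in> polys V \<Longrightarrow> p + q \<in> polys V"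
  unfolding polys_def using keys_add[of p q] by blast

lemma polys_mult: "p \<in> polys V \<Longrightarrow> q \<in> polys V \<Longrightarrow> p * q \<in> polys V"
  unfolding polys_def
proof (intro CollectI ballI, elim CollectE)
  fix x assume p: "\<forall>a\<in>Poly_Mapping.keys p. Poly_Mapping.keys a \<subseteq> V"
    and q: "\<forall>a\<in>Poly_Mapping.keys q. Poly_Mapping.keys a \<subseteq> V"
    and x: "x \<in> Poly_Mapping.keys (p * q)"
  have "x \<in> {a + b | a b. a \<in> Poly_Mapping.keys p \<and> b \<in> Poly_Mapping.keys q}"
    using keys_mult[of p q] x by (rule subsetD)
  then obtain a b where ab: "x = a + b" "a \<in> Poly_Mapping.keys p" "b \<in> Poly_Mapping.keys q"
    by blast
  have "Poly_Mapping.keys x \<subseteq> Poly_Mapping.keys a \<union> Poly_Mapping.keys b" using ab(1) keys_add by simp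
  then show "Poly_Mapping.keys x \<subseteq> V" using p q ab(2,3) by blast
qed

lemma polys_const: "Poly_Mapping.single 0 c \<in> polys V"
  by (simp add: polys_def)

lemma polys_one: "(1::('v,'k::comm_ring_1) mpoly) \<in> polys V"
  by (metis mon_def mon_zero polys_const)

lemma polys_zero: "0 \<in> polys V"
  by (simp add: polys_def)

lemma polys_sum: "(\<And>x. x \<in> X \<Longrightarrow> f x \<in> polys V) \<Longrightarrow> sum f X \<in> polys V"
  by (induction X rule: infinite_finite_induct) (auto simp: polys_zero polys_add)

lemma polys_prod: "(\<And>x. x \<in> X \<Longrightarrow> f x \<in> (polys V :: ('v,'k::comm_ring_1) mpoly set)) \<Longrightarrow> prod f X \<in> polys V"
  by (induction X rule: infinite_finite_induct) (auto simp: polys_one polys_mult)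

lemma polys_power: "p \<in> (polys V :: ('v,'k::comm_ring_1) mpoly set) \<Longrightarrow> p ^ e \<in> polys V"
  by (induction e) (auto simp: polys_one polys_mult)

lemma subst_polys: "(\<And>v. g v \<in> polys V) \<Longrightarrow> subst g p \<in> polys V"
  unfolding subst_def by (intro polys_sum polys_mult polys_const polys_prod polys_power) auto

definition sr :: "'a::comm_ring_1 set \<Rightarrow> bool" where
  "sr C \<longleftrightarrow> 0 \<in> C \<and> 1 \<in> C \<and> (\<forall>x\<in>C. \<forall>y\<in>C. x + y \<in> C \<and> x * y \<in> C)"

lemma sr_polys: "sr (polys V :: ('v,'k::comm_ring_1) mpoly set)"
  by (simp add: sr_def polys_zero polys_one polys_add polys_mult)

lemma gi_zero: "0 \<in> gen_ideal C G"
  unfolding gen_ideal_def by (rule CollectI, rule exI[of _ "{}"]) auto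

lemma gi_gen: "g \<in> G \<Longrightarrow> c \<in> C \<Longrightarrow> c * g \<in> gen_ideal C G"
  unfolding gen_ideal_def by (rule CollectI, rule exI[of _ "{g}"], rule exI[of _ "\<lambda>_. c"]) auto

lemma gi_gen1: "sr C \<Longrightarrow> g \<in> G \<Longrightarrow> g \<in> gen_ideal C G"
  using gi_gen[of g G 1 C] by (simp add: sr_def)

lemma gi_add:
  assumes "sr C" "x \<in> gen_ideal C G" "y \<in> gen_ideal C G"
  shows "x + y \<in> gen_ideal C G"
proof -
  obtain F1 c1 where 1: "finite F1" "F1 \<subseteq> G" "\<forall>f\<in>F1. c1 f \<in> C" "x = (\<Sum>f\<in>F1. c1 f * f)"
    using assms(2) by (auto simp: gen_ideal_def)
  obtain F2 c2 where 2: "finite F2" "F2 \<subseteq> G" "\<forall>f\<in>F2. c2 f \<in> C" "y = (\<Sum>f\<in>F2. c2 f * f)"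
    using assms(3) by (auto simp: gen_ideal_def)
  define c where "c f = (if f \<in> F1 then c1 f else 0) + (if f \<in> F2 then c2 f else 0)" for f
  have "(\<Sum>f\<in>F1 \<union> F2. c f * f) = (\<Sum>f\<in>F1 \<union> F2. (if f \<in> F1 then c1 f * f else 0)) + (\<Sum>f\<in>F1 \<union> F2. (if f \<in> F2 then c2 f * f else 0))"
    unfolding sum.distrib[symmetric] by (rule sum.cong) (auto simp: c_def distrib_right)
  also have "\<dots> = x + y"
  proof -
    have a: "(\<Sum>f\<in>F1 \<union> F2. (if f \<in> F1 then c1 f * f else 0)) = (\<Sum>f\<in>(F1 \<union> F2) \<inter> F1. c1 f * f)"
      by (rule sum.inter_restrict[symmetric]) (use 1 2 in auto)
    have b: "(\<Sum>f\<in>F1 \<union> F2. (if f \<in> F2 then c2 f * f else 0)) = (\<Sum>f\<in>(F1 \<union> F2) \<inter> F2. c2 f * f)"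
      by (rule sum.inter_restrict[symmetric]) (use 1 2 in auto)
    have "(F1 \<union> F2) \<inter> F1 = F1" "(F1 \<union> F2) \<inter> F2 = F2" by auto
    then show ?thesis using a b 1 2 by simp
  qed
  finally have "x + y = (\<Sum>f\<in>F1 \<union> F2. c f * f)" by simp
  moreover have "\<forall>f\<in>F1 \<union> F2. c f \<in> C"
    using 1 2 assms(1) by (auto simp: c_def sr_def)
  ultimately show ?thesis unfolding gen_ideal_def
    by (intro CollectI exI[of _ "F1 \<union> F2"] exI[of _ c]) (use 1 2 in auto)
qed

lemma gi_sum: "sr C \<Longrightarrow> (\<And>x. x \<in> X \<Longrightarrow> f x \<in> gen_ideal C G) \<Longrightarrow> sum f X \<in> gen_ideal C G"
  by (induction X rule: infinite_finite_induct) (auto simp: gi_zero gi_add)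

lemma gi_smult:
  assumes "sr C" "c \<in> C" "x \<in> gen_ideal C G"
  shows "c * x \<in> gen_ideal C G"
proof -
  obtain F c1 where 1: "finite F" "F \<subseteq> G" "\<forall>f\<in>F. c1 f \<in> C" "x = (\<Sum>f\<in>F. c1 f * f)"
    using assms(3) by (auto simp: gen_ideal_def)
  have "c * x = (\<Sum>f\<in>F. (c * c1 f) * f)" by (simp add: 1 sum_distrib_left ac_simps)
  moreover have "\<forall>f\<in>F. c * c1 f \<in> C" using 1 assms by (auto simp: sr_def)
  ultimately show ?thesis unfolding gen_ideal_def
    by (intro CollectI exI[of _ F] exI[of _ "\<lambda>f. c * c1 f"]) (use 1 in auto)
qed

lemma gi_mono:
  assumes "sr C" "H \<subseteq> gen_ideal C G"
  shows "gen_ideal C H \<subseteq> gen_ideal C G"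
proof
  fix x assume "x \<in> gen_ideal C H"
  then obtain F c1 where 1: "finite F" "F \<subseteq> H" "\<forall>f\<in>F. c1 f \<in> C" "x = (\<Sum>f\<in>F. c1 f * f)"
    by (auto simp: gen_ideal_def)
  show "x \<in> gen_ideal C G" unfolding 1(4)
    by (rule gi_sum[OF assms(1)]) (use 1 assms in \<open>auto intro: gi_smult\<close>)
qed

lemma gi_mult:
  assumes "sr C" "x \<in> gen_ideal C G" "y \<in> gen_ideal C H"
  shows "x * y \<in> gen_ideal C {g * h | g h. g \<in> G \<and> h \<in> H}"
proof -
  obtain F c1 where 1: "finite F" "F \<subseteq> G" "\<forall>f\<in>F. c1 f \<in> C" "x = (\<Sum>f\<in>F. c1 f * f)"
    using assms(2) by (auto simp: gen_ideal_def)
  obtain F2 c2 where 2: "finite F2" "F2 \<subseteq> H" "\<forall>f\<in>F2. c2 f \<in> C" "y = (\<Sum>f\<in>F2. c2 f * f)"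
    using assms(3) by (auto simp: gen_ideal_def)
  have fy: "f * y \<in> gen_ideal C {g * h | g h. g \<in> G \<and> h \<in> H}" if "f \<in> F" for f
  proof -
    have "f * y = (\<Sum>h\<in>F2. c2 h * (f * h))" by (simp add: 2 sum_distrib_left ac_simps)
    also have "\<dots> \<in> gen_ideal C {g * h | g h. g \<in> G \<and> h \<in> H}"
      using 1 2 that by (intro gi_sum[OF assms(1)] gi_gen) blast+
    finally show ?thesis .
  qed
  have "x * y = (\<Sum>f\<in>F. c1 f * (f * y))" by (simp add: 1 sum_distrib_right mult.assoc)
  also have "\<dots> \<in> gen_ideal C {g * h | g h. g \<in> G \<and> h \<in> H}"
    by (rule gi_sum[OF assms(1)], rule gi_smult[OF assms(1)]) (use 1 fy in auto)
  finally show ?thesis .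
qed

lemma gi_hom:
  assumes "sr C'" "\<And>a b. h (a + b) = h a + h b" "\<And>a b. h (a * b) = h a * h b" "h 0 = 0"
    "\<And>c. c \<in> C \<Longrightarrow> h c \<in> C'" "\<And>f. f \<in> G \<Longrightarrow> h f \<in> gen_ideal C' H" "x \<in> gen_ideal C G"
  shows "h x \<in> gen_ideal C' H"
proof -
  obtain F c1 where 1: "finite F" "F \<subseteq> G" "\<forall>f\<in>F. c1 f \<in> C" "x = (\<Sum>f\<in>F. c1 f * f)"
    using assms(7) by (auto simp: gen_ideal_def)
  have hs: "h (sum g X) = (\<Sum>x\<in>X. h (g x))" for g and X :: "'c set"
    by (induction X rule: infinite_finite_induct) (auto simp: assms(2,4))
  show ?thesis unfolding 1(4) hs assms(3)
    by (rule gi_sum[OF assms(1)], rule gi_smult[OF assms(1)]) (use 1 assms(5,6) in auto)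
qed




lemma var_mon: "var k = mon (Poly_Mapping.single k 1)" by (simp add: var_def)

lemma psi_var_mon: "psi_var n q m A = mon (\<Sum>k\<in>{k\<in>{1..n}. calA q m k = A}. Poly_Mapping.single k 1)"
proof (cases "\<exists>k\<in>{1..n}. A = calA q m k")
  case True
  then show ?thesis by (simp add: psi_var_def var_mon mon_prod)
next
  case False
  then have E: "{k\<in>{1..n}. calA q m k = A} = {}" by auto
  have "psi_var n q m A = 1" using False by (simp add: psi_var_def)
  moreover have "mon (\<Sum>k\<in>{k\<in>{1..n}. calA q m k = A}. Poly_Mapping.single k 1) = (1::(nat,'a) mpoly)"
    by (simp only: E sum.empty mon_zero)
  ultimately show ?thesis by simp
qed

definition gam :: "nat \<Rightarrow> nat \<Rightarrow> (nat \<Rightarrow> (nat, 'k::comm_ring_1) mpoly) \<Rightarrow> (nat set \<Rightarrow>\<^sub>0 nat) \<Rightarrow> (nat \<Rightarrow>\<^sub>0 nat)" where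
  "gam n q m b = Abs_poly_mapping (\<lambda>k. if k \<in> {1..n} then Poly_Mapping.lookup b (calA q m k) else 0)"

lemma lookup_gam: "Poly_Mapping.lookup (gam n q m b) k = (if k \<in> {1..n} then Poly_Mapping.lookup b (calA q m k) else 0)"
proof -
  have "finite {k. (if k \<in> {1..n} then Poly_Mapping.lookup b (calA q m k) else 0) \<noteq> 0}"
    by (rule finite_subset[of _ "{1..n}"]) auto
  then show ?thesis by (simp add: gam_def)
qed

lemma psi_mon: "psi n q m (mon b) = mon (gam n q m b)"
proof -
  define K where "K A = {k\<in>{1..n}. calA q m k = A}" for A
  have "psi n q m (mon b) = (\<Prod>A\<in>Poly_Mapping.keys b. psi_var n q m A ^ Poly_Mapping.lookup b A)"
    by (simp add: psi_def subst_mon Gp_def)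
  also have "\<dots> = (\<Prod>A\<in>Poly_Mapping.keys b. mon (\<Sum>j<Poly_Mapping.lookup b A. \<Sum>k\<in>K A. Poly_Mapping.single k 1))"
    by (simp add: psi_var_mon mon_power K_def)
  also have "\<dots> = mon (\<Sum>A\<in>Poly_Mapping.keys b. \<Sum>j<Poly_Mapping.lookup b A. \<Sum>k\<in>K A. Poly_Mapping.single k 1)"
    by (simp add: mon_prod)
  also have "(\<Sum>A\<in>Poly_Mapping.keys b. \<Sum>j<Poly_Mapping.lookup b A. \<Sum>k\<in>K A. Poly_Mapping.single k (1::nat)) = gam n q m b"
  proof (rule poly_mapping_eqI)
    fix k
    have fK: "finite (K A)" for A by (simp add: K_def)
    have inner: "(\<Sum>k'\<in>K A. Poly_Mapping.lookup (Poly_Mapping.single k' (1::nat)) k) = (if k \<in> K A then 1 else 0)" for A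
      using fK[of A] by (simp add: lookup_single when_def)
    have "Poly_Mapping.lookup (\<Sum>A\<in>Poly_Mapping.keys b. \<Sum>j<Poly_Mapping.lookup b A. \<Sum>k\<in>K A. Poly_Mapping.single k (1::nat)) k
       = (\<Sum>A\<in>Poly_Mapping.keys b. Poly_Mapping.lookup b A * (if k \<in> K A then 1 else 0))"
      by (simp only: lookup_sum inner) simp
    also have "\<dots> = (\<Sum>A\<in>Poly_Mapping.keys b. if A = calA q m k then (if k \<in> {1..n} then Poly_Mapping.lookup b A else 0) else 0)"
      by (rule sum.cong) (auto simp: K_def)
    also have "\<dots> = Poly_Mapping.lookup (gam n q m b) k"
      by (simp add: lookup_gam sum.delta' in_keys_iff)
    finally show "Poly_Mapping.lookup (\<Sum>A\<in>Poly_Mapping.keys b. \<Sum>j<Poly_Mapping.lookup b A. \<Sum>k\<in>K A. Poly_Mapping.single k (1::nat)) k = Poly_Mapping.lookup (gam n q m b) k" .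
  qed
  finally show ?thesis .
qed

lemma psi_polys: "psi n q m p \<in> polys {1..n}"
  unfolding psi_def
proof (rule subst_polys)
  fix A
  show "psi_var n q m A \<in> polys {1..n}"
    unfolding psi_var_mon polys_def using keys_sum by (fastforce simp: mon_def)
qed

lemma psi_add: "psi n q m (a + b) = psi n q m a + psi n q m b" by (simp add: psi_def subst_add)
lemma psi_mult: "psi n q m (a * b) = psi n q m a * psi n q m b" by (simp add: psi_def subst_mult)
lemma psi_zero: "psi n q m 0 = 0" by (simp add: psi_def)

lemma var_dvd_mon: "(var k :: ('v,'k::comm_ring_1) mpoly) dvd mon a \<longleftrightarrow> 1 \<le> Poly_Mapping.lookup a k"
proof -
  have "(\<forall>v. Poly_Mapping.lookup (Poly_Mapping.single k (1::nat)) v \<le> Poly_Mapping.lookup a v) \<longleftrightarrow> 1 \<le> Poly_Mapping.lookup a k"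
    by (auto simp: lookup_single when_def)
  then show ?thesis by (simp add: var_mon mon_dvd_iff)
qed

lemma gam_lcmexp:
  assumes "finite X" "X \<noteq> {}"
  shows "gam n q m (lcmexp X) = lcmexp (gam n q m ` X)"
proof (rule poly_mapping_eqI)
  fix k
  show "Poly_Mapping.lookup (gam n q m (lcmexp X)) k = Poly_Mapping.lookup (lcmexp (gam n q m ` X)) k"
    using assms by (auto simp: lookup_gam lookup_lcmexp image_image)
qed




lemma psi_indic:
  fixes m :: "nat \<Rightarrow> (nat, 'k::field) mpoly"
  assumes fS: "finite S" and mi: "m i = mon al" and kal: "Poly_Mapping.keys al \<subseteq> {1..n}"
    and le1: "\<forall>v. Poly_Mapping.lookup al v \<le> 1"
    and cA: "\<And>k. k \<in> {1..n} \<Longrightarrow> calA q m k \<in> S \<longleftrightarrow> 1 \<le> Poly_Mapping.lookup al k"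
  shows "psi n q m (mon (\<Sum>A\<in>S. Poly_Mapping.single A 1)) = m i"
proof -
  have "gam n q m (\<Sum>A\<in>S. Poly_Mapping.single A 1) = al"
  proof (rule poly_mapping_eqI)
    fix k
    show "Poly_Mapping.lookup (gam n q m (\<Sum>A\<in>S. Poly_Mapping.single A 1)) k = Poly_Mapping.lookup al k"
    proof (cases "k \<in> {1..n}")
      case True
      have "Poly_Mapping.lookup (\<Sum>A\<in>S. Poly_Mapping.single A (1::nat)) (calA q m k) = (if calA q m k \<in> S then 1 else 0)"
        using fS by (simp add: lookup_sum lookup_single when_def)
      then show ?thesis using True cA[OF True] le1[rule_format, of k] by (simp add: lookup_gam)
    next
      case False
      then have "k \<notin> Poly_Mapping.keys al" using kal by blast
      then show ?thesis using False by (auto simp: lookup_gam in_keys_iff)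
    qed
  qed
  then show ?thesis by (simp add: psi_mon mi)
qed

lemma finite_Yvars: "finite (Yvars q)"
  by (rule finite_subset[of _ "Pow {1..q}"]) (auto simp: Yvars_def)

lemma eps_mon: "eps q i = mon (\<Sum>A\<in>{A\<in>Yvars q. i \<in> A}. Poly_Mapping.single A 1)"
  by (simp add: eps_def var_mon mon_prod)

lemma epsD_mon: "epsD q D i = mon (\<Sum>A\<in>{A\<in>QD q D. i \<in> A}. Poly_Mapping.single A 1)"
  by (simp add: epsD_def var_mon mon_prod)

lemma finite_QD: "finite (QD q D)"
  by (rule finite_subset[OF _ finite_Yvars[of q]]) (auto simp: QD_def)

theorem proposition4p2:
  fixes n q :: nat
    and m :: "nat \<Rightarrow> (nat, 'k::field) mpoly"
    and D :: "(nat \<times> nat set) set"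
  assumes sqf: "\<forall>j\<in>{1..q}. squarefree_monomial_in {1..n} (m j)"
    and finD: "finite D"
    and Dsub: "D \<subseteq> {1..q} \<times> (Pow {1..q} - {{}})"
    and Ddiv: "\<forall>(b,B)\<in>D. m b dvd mon_lcm (m ` B)"
  defines "R \<equiv> polys {1..n} :: (nat, 'k) mpoly set"
    and "I \<equiv> gen_ideal (polys {1..n}) (m ` {1..q})"
  shows "(\<forall>i\<in>{1..q}. psi n q m (epsD q D i) = psi n q m (eps q i)
                    \<and> psi n q m (eps q i) = m i)
    \<and> (\<forall>r\<ge>1. \<forall>a\<in>Nrq q r. psi n q m (epsD_pow q D a) = mpow q m a)
    \<and> (\<forall>r>0. gen_ideal R (psi n q m ` ideal_pow (polys (Yvars q)) (ED q D) r) = ideal_pow R I r)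
    \<and> (\<forall>r\<ge>1. \<forall>t::nat\<ge>1. \<forall>a::nat \<Rightarrow> nat \<Rightarrow> nat. (\<forall>l\<in>{1..t}. a l \<in> Nrq q r) \<longrightarrow>
         psi n q m (mon_lcm ((\<lambda>l. epsD_pow q D (a l)) ` {1..t}))
           = mon_lcm ((\<lambda>l. mpow q m (a l)) ` {1..t}))"
proof -
  have "\<forall>j\<in>{1..q}. \<exists>al. m j = mon al \<and> Poly_Mapping.keys al \<subseteq> {1..n} \<and> (\<forall>v. Poly_Mapping.lookup al v \<le> 1)"
    using sqf by (auto simp: squarefree_monomial_in_def)
  then obtain al where al: "\<And>j. j \<in> {1..q} \<Longrightarrow> m j = mon (al j) \<and> Poly_Mapping.keys (al j) \<subseteq> {1..n} \<and> (\<forall>v. Poly_Mapping.lookup (al j) v \<le> 1)"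
    by metis
  have calA_iff: "j \<in> calA q m k \<longleftrightarrow> j \<in> {1..q} \<and> 1 \<le> Poly_Mapping.lookup (al j) k" for j k
    using al[of j] by (auto simp: calA_def var_dvd_mon)
  have calA_sub: "calA q m k \<subseteq> {1..q}" for k by (auto simp: calA_def)
  have inQD: "calA q m k \<in> QD q D" if "i \<in> calA q m k" for i k
  proof -
    have Y: "calA q m k \<in> Yvars q" using that calA_sub[of k] by (auto simp: Yvars_def)
    have "calA q m k \<inter> B \<noteq> {}" if bB: "(b, B) \<in> D" "b \<in> calA q m k" for b B
    proof -
      have B: "B \<subseteq> {1..q}" "B \<noteq> {}" "finite B" using bB(1) Dsub by (auto intro: finite_subset)
      have b: "b \<in> {1..q}" using bB(1) Dsub by auto
      have mB: "m ` B = mon ` (al ` B)" unfolding image_image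
        by (rule image_cong) (use B(1) al in auto)
      have "m b dvd mon_lcm (m ` B)" using Ddiv bB(1) by auto
      also have "mon_lcm (m ` B) = mon (lcmexp (al ` B))" unfolding mB
        by (rule mon_lcm_mon) (use B in auto)
      finally have "m b dvd mon (lcmexp (al ` B))" .
      moreover have "var k dvd m b" using bB(2) by (simp add: calA_def)
      ultimately have "var k dvd (mon (lcmexp (al ` B)) :: (nat,'k) mpoly)" by (rule dvd_trans[rotated])
      then have "1 \<le> Max ((\<lambda>a. Poly_Mapping.lookup a k) ` al ` B)"
        using B by (simp add: var_dvd_mon lookup_lcmexp)
      moreover have "Max ((\<lambda>a. Poly_Mapping.lookup a k) ` al ` B) \<in> (\<lambda>a. Poly_Mapping.lookup a k) ` al ` B"
        using B by (intro Max_in) auto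
      ultimately obtain j where "j \<in> B" "1 \<le> Poly_Mapping.lookup (al j) k" by auto
      then have "j \<in> calA q m k \<inter> B" using B calA_iff by auto
      then show ?thesis by blast
    qed
    then show ?thesis using Y by (auto simp: QD_def)
  qed
  have P1eps: "psi n q m (eps q i) = m i" if i: "i \<in> {1..q}" for i
    unfolding eps_mon
  proof (rule psi_indic)
    show "finite {A \<in> Yvars q. i \<in> A}" using finite_Yvars by auto
    show "m i = mon (al i)" "Poly_Mapping.keys (al i) \<subseteq> {1..n}" "\<forall>v. Poly_Mapping.lookup (al i) v \<le> 1"
      using al[OF i] by auto
    fix k assume "k \<in> {1..n}"
    show "calA q m k \<in> {A \<in> Yvars q. i \<in> A} \<longleftrightarrow> 1 \<le> Poly_Mapping.lookup (al i) k"
      using calA_iff[of i k] i calA_sub[of k] by (auto simp: Yvars_def)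
  qed
  have P1epsD: "psi n q m (epsD q D i) = m i" if i: "i \<in> {1..q}" for i
    unfolding epsD_mon
  proof (rule psi_indic)
    show "finite {A \<in> QD q D. i \<in> A}" using finite_QD by auto
    show "m i = mon (al i)" "Poly_Mapping.keys (al i) \<subseteq> {1..n}" "\<forall>v. Poly_Mapping.lookup (al i) v \<le> 1"
      using al[OF i] by auto
    fix k assume "k \<in> {1..n}"
    show "calA q m k \<in> {A \<in> QD q D. i \<in> A} \<longleftrightarrow> 1 \<le> Poly_Mapping.lookup (al i) k"
      using calA_iff[of i k] i inQD[of i k] by auto
  qed
  have P2: "psi n q m (epsD_pow q D a) = mpow q m a" for a
    by (simp add: epsD_pow_def mpow_def psi_def subst_prod subst_power)
       (simp add: psi_def[symmetric] P1epsD)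
  have psi_prod: "psi n q m (prod ff X) = (\<Prod>x\<in>X. psi n q m (ff x))" for ff and X :: "nat set"
    by (simp add: psi_def subst_prod)
  have srR: "sr R" unfolding R_def by (rule sr_polys)
  have srS: "sr (polys (Yvars q) :: (nat set, 'k) mpoly set)" by (rule sr_polys)
  have psiR: "psi n q m p \<in> R" for p unfolding R_def by (rule psi_polys)
  have hom: "psi n q m x \<in> gen_ideal R H"
    if "x \<in> gen_ideal C G" "\<And>f. f \<in> G \<Longrightarrow> psi n q m f \<in> gen_ideal R H" for x C G H
    by (rule gi_hom[OF srR psi_add psi_mult psi_zero psiR that(2) that(1)])
  have P3: "gen_ideal R (psi n q m ` ideal_pow (polys (Yvars q)) (ED q D) r) = ideal_pow R I r" for r
  proof
    show "gen_ideal R (psi n q m ` ideal_pow (polys (Yvars q)) (ED q D) r) \<subseteq> ideal_pow R I r"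
      unfolding ideal_pow_def
    proof (rule gi_mono[OF srR], rule subsetI, elim imageE)
      fix y and x :: "(nat set, 'k) mpoly" assume y: "y = psi n q m x"
        and x: "x \<in> gen_ideal (polys (Yvars q)) {\<Prod>i<r. f i |f. \<forall>i<r. f i \<in> ED q D}"
      show "y \<in> gen_ideal R {\<Prod>i<r. f i |f. \<forall>i<r. f i \<in> I}"
        unfolding y
      proof (rule hom[OF x])
        fix g :: "(nat set, 'k) mpoly" assume "g \<in> {\<Prod>i<r. f i |f. \<forall>i<r. f i \<in> ED q D}"
        then obtain f :: "nat \<Rightarrow> (nat set, 'k) mpoly" where g: "g = (\<Prod>i<r. f i)" and f: "\<forall>i<r. f i \<in> ED q D" by blast
        have "psi n q m (f i) \<in> I" if "i < r" for i
          unfolding I_def R_def[symmetric]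
        proof (rule hom)
          show "f i \<in> gen_ideal (polys (Yvars q)) (epsD q D ` {1..q})" using f that by (simp add: ED_def)
          fix e :: "(nat set, 'k) mpoly" assume "e \<in> epsD q D ` {1..q}"
          then obtain j where "j \<in> {1..q}" "e = epsD q D j" by blast
          then show "psi n q m e \<in> gen_ideal R (m ` {1..q})" using P1epsD
            by (auto intro: gi_gen1[OF srR])
        qed
        then have "psi n q m g \<in> {\<Prod>i<r. f i |f. \<forall>i<r. f i \<in> I}"
          unfolding g psi_prod by blast
        then show "psi n q m g \<in> gen_ideal R {\<Prod>i<r. f i |f. \<forall>i<r. f i \<in> I}"
          by (rule gi_gen1[OF srR])
      qed
    qed
  next
    define Mr where "Mr r = {(\<Prod>i<r. m (h i)) | h. \<forall>i<r. h i \<in> {1..q}}" for r :: nat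
    have claim: "\<forall>f. (\<forall>i<r. f i \<in> I) \<longrightarrow> (\<Prod>i<r. f i) \<in> gen_ideal R (Mr r)" for r :: nat
    proof (induction r)
      case 0
      have "1 \<in> Mr 0" by (simp add: Mr_def)
      then show ?case by (auto intro: gi_gen1[OF srR])
    next
      case (Suc r)
      show ?case
      proof (intro allI impI)
        fix f assume f: "\<forall>i<Suc r. f i \<in> I"
        have a: "(\<Prod>i<r. f i) \<in> gen_ideal R (Mr r)" using Suc.IH f by auto
        have b: "f r \<in> gen_ideal R (m ` {1..q})" using f by (simp add: I_def R_def)
        have "(\<Prod>i<Suc r. f i) \<in> gen_ideal R {g * h |g h. g \<in> Mr r \<and> h \<in> m ` {1..q}}"
          using gi_mult[OF srR a b] by simp
        also have "\<dots> \<subseteq> gen_ideal R (Mr (Suc r))"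
        proof (rule gi_mono[OF srR], rule subsetI)
          fix z assume "z \<in> {g * h |g h. g \<in> Mr r \<and> h \<in> m ` {1..q}}"
          then obtain h j where hj: "z = (\<Prod>i<r. m (h i)) * m j" "\<forall>i<r. h i \<in> {1..q}" "j \<in> {1..q}"
            by (auto simp: Mr_def)
          have "z = (\<Prod>i<Suc r. m ((h(r := j)) i))"
            unfolding hj(1) prod.lessThan_Suc by (auto intro!: prod.cong)
          moreover have "\<forall>i<Suc r. (h(r := j)) i \<in> {1..q}" using hj by auto
          ultimately have "z \<in> Mr (Suc r)" unfolding Mr_def by blast
          then show "z \<in> gen_ideal R (Mr (Suc r))" by (rule gi_gen1[OF srR])
        qed
        finally show "(\<Prod>i<Suc r. f i) \<in> gen_ideal R (Mr (Suc r))" .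
      qed
    qed
    have Msub: "Mr r \<subseteq> gen_ideal R (psi n q m ` ideal_pow (polys (Yvars q)) (ED q D) r)"
    proof
      fix z assume "z \<in> Mr r"
      then obtain h where h: "z = (\<Prod>i<r. m (h i))" "\<forall>i<r. h i \<in> {1..q}" by (auto simp: Mr_def)
      have "(\<Prod>i<r. epsD q D (h i) :: (nat set, 'k) mpoly) \<in> ideal_pow (polys (Yvars q)) (ED q D) r"
        unfolding ideal_pow_def
      proof (rule gi_gen1[OF srS])
        have hE: "(epsD q D (h i) :: (nat set, 'k) mpoly) \<in> ED q D" if "i < r" for i
          unfolding ED_def by (rule gi_gen1[OF srS]) (use h that in auto)
        show "(\<Prod>i<r. epsD q D (h i) :: (nat set, 'k) mpoly) \<in> {\<Prod>i<r. f i |f. \<forall>i<r. f i \<in> ED q D}"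
          by (rule CollectI, rule exI[of _ "\<lambda>i. epsD q D (h i)"]) (use hE in auto)
      qed
      moreover have "psi n q m (\<Prod>i<r. epsD q D (h i) :: (nat set, 'k) mpoly) = z"
        unfolding h psi_prod using h(2) P1epsD by simp
      ultimately have "z \<in> psi n q m ` ideal_pow (polys (Yvars q)) (ED q D) r" by force
      then show "z \<in> gen_ideal R (psi n q m ` ideal_pow (polys (Yvars q)) (ED q D) r)"
        by (rule gi_gen1[OF srR])
    qed
    show "ideal_pow R I r \<subseteq> gen_ideal R (psi n q m ` ideal_pow (polys (Yvars q)) (ED q D) r)"
      unfolding ideal_pow_def[of R I r]
    proof (rule gi_mono[OF srR], rule subsetI)
      fix z assume "z \<in> {\<Prod>i<r. f i |f. \<forall>i<r. f i \<in> I}"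
      then obtain f where "z = (\<Prod>i<r. f i)" "\<forall>i<r. f i \<in> I" by blast
      then have "z \<in> gen_ideal R (Mr r)" using claim by blast
      then show "z \<in> gen_ideal R (psi n q m ` ideal_pow (polys (Yvars q)) (ED q D) r)"
        using gi_mono[OF srR Msub] by blast
    qed
  qed
  have P4: "psi n q m (mon_lcm ((\<lambda>l. epsD_pow q D (a l)) ` {1..t}))
           = mon_lcm ((\<lambda>l. mpow q m (a l)) ` {1..t})" if t: "t \<ge> 1" for t and a :: "nat \<Rightarrow> nat \<Rightarrow> nat"
  proof -
    define e where "e i = (\<Sum>A\<in>{A\<in>QD q D. i \<in> A}. Poly_Mapping.single A (1::nat))" for i
    define E where "E b = (\<Sum>i\<in>{1..q}. \<Sum>j<b i. e i)" for b :: "nat \<Rightarrow> nat"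
    have eE: "epsD_pow q D b = mon (E b)" for b
      by (simp add: epsD_pow_def epsD_mon mon_power mon_prod E_def e_def)
    define X where "X = (\<lambda>l. E (a l)) ` {1..t}"
    have X: "finite X" "X \<noteq> {}" using t by (auto simp: X_def)
    have 1: "(\<lambda>l. epsD_pow q D (a l)) ` {1..t} = mon ` X"
      by (simp add: X_def eE image_image)
    have 2: "(\<lambda>l. mpow q m (a l)) ` {1..t} = mon ` (gam n q m ` X)"
      by (simp add: X_def P2[symmetric] eE psi_mon image_image)
    have gX: "finite (gam n q m ` X)" "gam n q m ` X \<noteq> {}" using X by auto
    show ?thesis unfolding 1 2 mon_lcm_mon[OF X] mon_lcm_mon[OF gX] psi_mon gam_lcmexp[OF X] ..
  qed
  show ?thesis using P1eps P1epsD P2 P3 P4 by auto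
qed


end
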